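(* There exists a measure-preserving transformation $T:[0,1]\to[0,1]$, generated by a network with task-driven neurons, and a point $\xi\in[0,1]$ such that the orbit $\{T^n(\xi): n\in\mathbb{N}\}$ is dense in $[0,1]$. Equivalently, for every $x\in[0,1]$ and every $\epsilon>0$ there exists $m\in\mathbb{N}$ with \[ |x - T^{m}(\xi)| < \epsilon . \]
   Context: $T^m$ denotes the $m$-fold composition of $T$ with itself. A task-driven neuron with input $\mathbf{z}\in\mathbb{R}^d$ computes $y=\sigma(g(\mathbf{z}))$, where $\sigma$ is a common activation function (e.g. ReLU) and the aggregation function $g$ replaces the usual inner product $\mathbf{w}^\top\mathbf{z}+b$ by a nonlinear expression with learnable coefficients built from polynomial terms $\mathbf{w}_k^\top \mathbf{z}^{\odot k}$ (element-wise powers), interaction terms $\sum_{r=1}^R\prod_{j=1}^m(\mathbf{a}_{r,j}^\top\mathbf{z})$, and possibly a periodic term $D\sin(\mathbf{z})$, plus a bias; in particular a neuron may have a polynomial of any order as its aggregation function. A network with task-driven neurons is a feedforward network built from such neurons. Measure-preserving is with respect to Lebesgue measure on $[0,1]$. *)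

theory Defs
  imports "HOL-Analysis.Analysis"
begin

text \<open>Inner product of coefficient list and input list; missing coefficients count as 0.\<close>
definition lin :: "real list \<Rightarrow> real list \<Rightarrow> real" where
  "lin w z = sum_list (map2 (*) w z)"

text \<open>A task-driven neuron: polynomial coefficient vectors w_1..w_K (w_k multiplies the
  element-wise k-th power of the input), interaction terms (a list of R products, each a list
  of m linear forms a_{r,j}), a periodic coefficient vector D and a bias b.\<close>
datatype neuron = Neuron "real list list" "real list list list" "real list" real

fun agg :: "neuron \<Rightarrow> real list \<Rightarrow> real" where
  "agg (Neuron W A D b) z =
     (\<Sum>k<length W. lin (W ! k) (map (\<lambda>t. t ^ (Suc k)) z))
     + sum_list (map (\<lambda>row. prod_list (map (\<lambda>a. lin a z) row)) A)
     + lin D (map sin z) + b"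

definition relu :: "real \<Rightarrow> real" where
  "relu t = max 0 t"

definition neuron_out :: "(real \<Rightarrow> real) \<Rightarrow> neuron \<Rightarrow> real list \<Rightarrow> real" where
  "neuron_out \<sigma> n z = \<sigma> (agg n z)"

definition layer_out :: "(real \<Rightarrow> real) \<Rightarrow> neuron list \<Rightarrow> real list \<Rightarrow> real list" where
  "layer_out \<sigma> L z = map (\<lambda>n. neuron_out \<sigma> n z) L"

definition net_out :: "(real \<Rightarrow> real) \<Rightarrow> neuron list list \<Rightarrow> real list \<Rightarrow> real list" where
  "net_out \<sigma> Ls z = fold (layer_out \<sigma>) Ls z"

definition generated_by_task_net :: "(real \<Rightarrow> real) \<Rightarrow> real set \<Rightarrow> (real \<Rightarrow> real) \<Rightarrow> bool" where
  "generated_by_task_net \<sigma> S T \<longleftrightarrow>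
     (\<exists>Ls. Ls \<noteq> [] \<and> length (last Ls) = 1 \<and> (\<forall>x\<in>S. T x = hd (net_out \<sigma> Ls [x])))"

definition unit_leb :: "real measure" where
  "unit_leb = restrict_space lborel {0..1}"

definition measure_preserving_on :: "real measure \<Rightarrow> (real \<Rightarrow> real) \<Rightarrow> bool" where
  "measure_preserving_on M T \<longleftrightarrow>
     T \<in> measurable M M \<and> (\<forall>A\<in>sets M. emeasure M (T -` A \<inter> space M) = emeasure M A)"

end

theory Submission
  imports Defs
begin

definition tent :: "real \<Rightarrow> real" where
  "tent x = min (2*x) (2 - 2*x)"

lemma tent_cont: "isCont tent x"
proof -
  have "isCont (\<lambda>x. min (2*x) (2 - 2*x)) (x::real)" by (intro continuous_intros)
  then show ?thesis unfolding tent_def[abs_def] .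
qed

lemma tent_pow_cont: "isCont (tent ^^ n) x"
proof (induction n arbitrary: x)
  case 0 then show ?case by simp
next
  case (Suc n)
  have "isCont (\<lambda>y. tent ((tent ^^ n) y)) x"
    by (rule isCont_o2[OF Suc tent_cont])
  then show ?case by simp
qed

lemma tent_surj:
  "\<forall>k y. k < (2::nat)^n \<and> 0 \<le> y \<and> y \<le> 1 \<longrightarrow>
     (\<exists>z. real k / 2^n \<le> z \<and> z \<le> (real k + 1) / 2^n \<and> (tent ^^ n) z = y)"
proof (induction n)
  case 0
  then show ?case by (auto intro!: exI)
next
  case (Suc n)
  show ?case
  proof (intro allI impI)
    fix k and y :: real assume H: "k < (2::nat)^Suc n \<and> 0 \<le> y \<and> y \<le> 1"
    show "\<exists>z. real k / 2^Suc n \<le> z \<and> z \<le> (real k + 1) / 2^Suc n \<and> (tent ^^ Suc n) z = y"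
    proof (cases "k < 2^n")
      case True
      then obtain w where w: "real k / 2^n \<le> w" "w \<le> (real k + 1) / 2^n" "(tent ^^ n) w = y"
        using Suc.IH[rule_format, of k y] H True by blast
      have "k+1 \<le> 2^n" using True by simp
      then have "real (k+1) \<le> real (2^n)" by (simp only: of_nat_le_iff)
      then have kb: "real k + 1 \<le> 2^n" by simp
      have "(real k + 1) / 2^n \<le> 1" using kb by simp
      then have w1: "w \<le> 1" using w(2) by linarith
      have w0: "0 \<le> w" proof -
        have "0 \<le> real k / 2^n" by simp
        then show ?thesis using w(1) by linarith
      qed
      have "tent (w/2) = w" unfolding tent_def using w1 by simp
      moreover have "real k / 2^Suc n \<le> w/2" using w(1) by (simp add: divide_simps)
      moreover have "w/2 \<le> (real k + 1) / 2^Suc n" using w(2) by (simp add: divide_simps)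
      moreover have "(tent^^Suc n) (w/2) = (tent^^n) (tent (w/2))" by (simp only: funpow_Suc_right o_apply)
      ultimately show ?thesis using w(3) by metis
    next
      case False
      define k' where "k' = 2^Suc n - 1 - k"
      have kk: "real k' = 2 * 2^n - 1 - real k" using H False unfolding k'_def
        by (simp add: of_nat_diff)
      have "k' < 2^n" using H False unfolding k'_def by auto
      then obtain w where w: "real k' / 2^n \<le> w" "w \<le> (real k' + 1) / 2^n" "(tent ^^ n) w = y"
        using Suc.IH[rule_format, of k' y] H by blast
      have "k'+1 \<le> 2^n" using \<open>k' < 2^n\<close> by simp
      then have "real (k'+1) \<le> real (2^n)" by (simp only: of_nat_le_iff)
      then have kb: "real k' + 1 \<le> 2^n" by simp
      have "(real k' + 1) / 2^n \<le> 1" using kb by simp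
      then have w1: "w \<le> 1" using w(2) by linarith
      have w0: "0 \<le> w" proof -
        have "0 \<le> real k' / 2^n" by simp
        then show ?thesis using w(1) by linarith
      qed
      have "tent (1 - w/2) = w" unfolding tent_def using w0 w1 by simp
      moreover have "real k / 2^Suc n \<le> 1 - w/2" using w(2) kk by (simp add: divide_simps algebra_simps)
      moreover have "1 - w/2 \<le> (real k + 1) / 2^Suc n" using w(1) kk by (simp add: divide_simps algebra_simps)
      moreover have "(tent^^Suc n) (1 - w/2) = (tent^^n) (tent (1 - w/2))" by (simp only: funpow_Suc_right o_apply)
      ultimately show ?thesis using w(3) by metis
    qed
  qed
qed

lemma tent_step:
  assumes "0 \<le> a" "a < b" "b \<le> 1" "0 \<le> y" "y \<le> 1" "e > 0"
  shows "\<exists>a' b'. a \<le> a' \<and> a' < b' \<and> b' \<le> b \<and> (\<exists>n. \<forall>w\<in>{a'..b'}. \<bar>(tent^^n) w - y\<bar> < e)"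
proof -
  obtain n where n: "(1/2::real)^n < (b-a)/2"
    using real_arch_pow_inv[of "(b-a)/2" "1/2::real"] assms by auto
  have pp: "(0::real) < 2^n" by simp
  have p: "2 < (b-a) * 2^n" using n pp by (simp add: power_one_over field_simps)
  define c where "c = \<lceil>a * 2^n\<rceil>"
  have "0 \<le> a * 2^n" using assms by simp
  then have c0: "0 \<le> c" unfolding c_def by simp
  define k where "k = nat c"
  have kc: "real k = of_int c" using c0 unfolding k_def by simp
  have k1: "a*2^n \<le> real k" using kc c_def by simp
  have k2: "real k < a*2^n + 1" using kc unfolding c_def by linarith
  have lo: "a \<le> real k / 2^n" using k1 pp by (simp add: field_simps)
  have k3: "real k + 1 \<le> b * 2^n" using k2 p by (simp add: algebra_simps)
  have hi: "(real k + 1) / 2^n \<le> b" using k3 pp by (simp add: field_simps)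
  have "b * 2^n \<le> 2^n" using mult_right_mono[of b 1 "2^n"] assms pp by simp
  then have "real k < 2^n" using k3 by linarith
  then have "real k < real (2^n)" by simp
  then have kl: "k < 2^n" by (simp only: of_nat_less_iff)
  obtain z where z: "real k / 2^n \<le> z" "z \<le> (real k + 1) / 2^n" "(tent ^^ n) z = y"
    using tent_surj[of n, rule_format, of k y] kl assms by blast
  have "continuous (at z) (tent ^^ n)" using tent_pow_cont by blast
  then obtain d where d: "d > 0" "\<And>x'. dist x' z < d \<Longrightarrow> dist ((tent^^n) x') ((tent^^n) z) < e"
    unfolding continuous_at_eps_delta using assms(6) by blast
  define a' where "a' = max a (z - d/2)"
  define b' where "b' = min b (z + d/2)"
  have za: "a \<le> z" "z \<le> b" using lo hi z by linarith+
  have "\<forall>w\<in>{a'..b'}. \<bar>(tent^^n) w - y\<bar> < e"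
  proof
    fix w assume "w \<in> {a'..b'}"
    then have "dist w z < d" unfolding a'_def b'_def dist_real_def using d(1) by auto
    then show "\<bar>(tent^^n) w - y\<bar> < e" using d(2) z(3) by (simp add: dist_real_def)
  qed
  moreover have "a \<le> a'" "a' < b'" "b' \<le> b" unfolding a'_def b'_def using za d(1) assms by auto
  ultimately show ?thesis by blast
qed

lemma nest:
  fixes R :: "nat \<Rightarrow> real \<Rightarrow> real \<Rightarrow> bool"
  assumes H: "\<And>j a b. 0 \<le> a \<Longrightarrow> a < b \<Longrightarrow> b \<le> 1 \<Longrightarrow> (\<exists>a' b'. a \<le> a' \<and> a' < b' \<and> b' \<le> b \<and> R j a' b')"
  shows "\<exists>\<xi>\<in>{0..1}. \<forall>j. \<exists>a b. a \<le> \<xi> \<and> \<xi> \<le> b \<and> R j a b"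
proof -
  define P where "P j a b p \<longleftrightarrow> (a \<le> fst p \<and> fst p < snd p \<and> snd p \<le> b \<and> R j (fst p) (snd p))"
    for j a b and p :: "real \<times> real"
  define g where "g j a b = (SOME p. P j a b p)" for j a b
  have g: "a \<le> fst (g j a b) \<and> fst (g j a b) < snd (g j a b) \<and> snd (g j a b) \<le> b \<and> R j (fst (g j a b)) (snd (g j a b))"
    if hh: "0 \<le> a" "a < b" "b \<le> 1" for j a b
  proof -
    obtain a' b' where "P j a b (a', b')" using H[OF hh, of j] unfolding P_def by auto
    then have "P j a b (g j a b)" unfolding g_def by (rule someI)
    then show ?thesis unfolding P_def .
  qed
  define s where "s = rec_nat ((0::real),(1::real)) (\<lambda>j p. g j (fst p) (snd p))"
  have s0: "s 0 = (0,1)" unfolding s_def by simp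
  have sS: "s (Suc j) = g j (fst (s j)) (snd (s j))" for j unfolding s_def by simp
  have inv: "0 \<le> fst (s j) \<and> fst (s j) < snd (s j) \<and> snd (s j) \<le> 1" for j
  proof (induction j)
    case 0 then show ?case using s0 by simp
  next
    case (Suc j) then show ?case using g[of "fst (s j)" "snd (s j)" j] sS[of j] by auto
  qed
  have step: "fst (s j) \<le> fst (s (Suc j)) \<and> snd (s (Suc j)) \<le> snd (s j) \<and> R j (fst (s (Suc j))) (snd (s (Suc j)))" for j
    using g[of "fst (s j)" "snd (s j)" j] sS[of j] inv[of j] by auto
  have mono1: "fst (s i) \<le> fst (s j)" if "i \<le> j" for i j
    using that
  proof (induction j)
    case 0 then show ?case by simp
  next
    case (Suc j)
    show ?case
    proof (cases "i = Suc j")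
      case True then show ?thesis by simp
    next
      case False then have "i \<le> j" using Suc.prems by simp
      then show ?thesis using Suc.IH step[of j] by linarith
    qed
  qed
  have mono2: "snd (s j) \<le> snd (s i)" if "i \<le> j" for i j
    using that
  proof (induction j)
    case 0 then show ?case by simp
  next
    case (Suc j)
    show ?case
    proof (cases "i = Suc j")
      case True then show ?thesis by simp
    next
      case False then have "i \<le> j" using Suc.prems by simp
      then show ?thesis using Suc.IH step[of j] by linarith
    qed
  qed
  have ab: "fst (s i) \<le> snd (s j)" for i j
  proof -
    have "fst (s i) \<le> fst (s (max i j))" by (rule mono1) simp
    also have "\<dots> \<le> snd (s (max i j))" using inv[of "max i j"] by simp
    also have "\<dots> \<le> snd (s j)" by (rule mono2) simp
    finally show ?thesis .
  qed
  define \<xi> where "\<xi> = Sup (range (\<lambda>i. fst (s i)))"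
  have bdd: "bdd_above (range (\<lambda>i. fst (s i)))" by (rule bdd_aboveI[where M="snd (s 0)"]) (use ab in auto)
  have lo: "fst (s i) \<le> \<xi>" for i unfolding \<xi>_def using bdd by (intro cSup_upper) auto
  have hi: "\<xi> \<le> snd (s j)" for j unfolding \<xi>_def using ab by (intro cSup_least) auto
  have "\<xi> \<in> {0..1}" using lo[of 0] hi[of 0] s0 by simp
  moreover have "\<forall>j. \<exists>a b. a \<le> \<xi> \<and> \<xi> \<le> b \<and> R j a b"
    using lo hi step by blast
  ultimately show ?thesis by blast
qed

lemma affine_half:
  fixes c t :: real
  assumes c: "c \<noteq> 0" and A: "A \<in> sets borel"
  shows "emeasure lborel A = ennreal \<bar>c\<bar> * emeasure lborel ((\<lambda>x. t + c * x) -` A)"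
proof -
  have L: "emeasure lborel A = emeasure (density (distr lborel borel (\<lambda>x. t + c * x)) (\<lambda>_. ennreal \<bar>c\<bar>)) A"
    using arg_cong[where f="\<lambda>M. emeasure M A", OF lborel_real_affine[OF c, of t]] .
  have m: "(\<lambda>x. t + c * x) \<in> measurable lborel borel" by simp
  have "emeasure (density (distr lborel borel (\<lambda>x. t + c * x)) (\<lambda>_. ennreal \<bar>c\<bar>)) A
      = (\<integral>\<^sup>+ x. ennreal \<bar>c\<bar> * indicator A x \<partial>(distr lborel borel (\<lambda>x. t + c * x)))"
    using A by (intro emeasure_density) auto
  also have "\<dots> = ennreal \<bar>c\<bar> * emeasure (distr lborel borel (\<lambda>x. t + c * x)) A"
    using A by (intro nn_integral_cmult_indicator) simp
  also have "\<dots> = ennreal \<bar>c\<bar> * emeasure lborel ((\<lambda>x. t + c * x) -` A)"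
    using emeasure_distr[OF m A] by simp
  finally show ?thesis using L by simp
qed

lemma tent_mp: "measure_preserving_on unit_leb tent"
  unfolding measure_preserving_on_def unit_leb_def
proof (intro conjI ballI)
  have tc: "continuous_on UNIV tent" using tent_cont by (simp add: continuous_at_imp_continuous_on)
  have "tent \<in> measurable borel borel" using borel_measurable_continuous_onI[OF tc] .
  then have "tent \<in> measurable lborel lborel" by simp
  moreover have "tent \<in> {0..1} \<rightarrow> {0..1}" by (auto simp: tent_def)
  ultimately show "tent \<in> measurable (restrict_space lborel {0..1}) (restrict_space lborel {0..1})"
    by (rule measurable_restrict_space3)
next
  fix A assume A: "A \<in> sets (restrict_space lborel {0..1::real})"
  have S: "{0..1::real} \<inter> space lborel \<in> sets lborel" by simp
  have Asub: "A \<subseteq> {0..1}" and Ab: "A \<in> sets borel"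
    using A sets_restrict_space_iff[OF S] by auto
  define f1 where "f1 = (\<lambda>x::real. 0 + 2 * x)"
  define f2 where "f2 = (\<lambda>x::real. 2 + (-2) * x)"
  have sp: "space (restrict_space lborel {0..1::real}) = {0..1}" by simp
  have eq: "tent -` A \<inter> {0..1} = f1 -` A \<union> (f2 -` A - {1/2})"
  proof (intro equalityI subsetI)
    fix x assume x: "x \<in> tent -` A \<inter> {0..1}"
    show "x \<in> f1 -` A \<union> (f2 -` A - {1/2})"
    proof (cases "x \<le> 1/2")
      case True then have "tent x = f1 x" unfolding tent_def f1_def by simp
      then show ?thesis using x by auto
    next
      case False then have "tent x = f2 x" unfolding tent_def f2_def by simp
      then show ?thesis using x False by auto
    qed
  next
    fix x assume x: "x \<in> f1 -` A \<union> (f2 -` A - {1/2})"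
    show "x \<in> tent -` A \<inter> {0..1}"
    proof (cases "x \<in> f1 -` A")
      case True
      then have "0 \<le> 2*x" "2*x \<le> 1" using Asub unfolding f1_def by auto
      then have "tent x = f1 x" unfolding tent_def f1_def by simp
      then show ?thesis using True \<open>0 \<le> 2*x\<close> \<open>2*x \<le> 1\<close> by auto
    next
      case False
      then have x2: "x \<in> f2 -` A" "x \<noteq> 1/2" using x by auto
      then have "0 \<le> 2 - 2*x" "2 - 2*x \<le> 1" using Asub unfolding f2_def by auto
      then have "tent x = f2 x" unfolding tent_def f2_def using x2 by simp
      then show ?thesis using x2 \<open>0 \<le> 2 - 2*x\<close> \<open>2 - 2*x \<le> 1\<close> by auto
    qed
  qed
  have "f1 \<in> measurable lborel borel" by (simp add: f1_def)
  from measurable_sets[OF this Ab] have m1: "f1 -` A \<in> sets lborel" by simp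
  have "f2 \<in> measurable lborel borel" by (simp add: f2_def)
  from measurable_sets[OF this Ab] have m2: "f2 -` A \<in> sets lborel" by simp
  have m2': "f2 -` A - {1/2} \<in> sets lborel" using m2 by auto
  have disj: "f1 -` A \<inter> (f2 -` A - {1/2}) = {}"
  proof (intro equalityI subsetI)
    fix x assume "x \<in> f1 -` A \<inter> (f2 -` A - {1/2})"
    then have "2*x \<in> A" "2 - 2*x \<in> A" "x \<noteq> 1/2" unfolding f1_def f2_def by auto
    then have "2*x \<le> 1" "2 - 2*x \<le> 1" "x \<noteq> 1/2" using Asub by auto
    then show "x \<in> {}" by simp
  qed simp
  have e1: "emeasure lborel A = 2 * emeasure lborel (f1 -` A)"
    using affine_half[of 2 A 0] Ab unfolding f1_def by simp
  have e2: "emeasure lborel A = 2 * emeasure lborel (f2 -` A)"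
    using affine_half[of "-2" A 2] Ab unfolding f2_def by simp
  have e2': "emeasure lborel (f2 -` A - {1/2}) = emeasure lborel (f2 -` A)"
    using m2 by (intro emeasure_Diff_null_set) auto
  have uv: "emeasure lborel (f1 -` A) = emeasure lborel (f2 -` A)"
    using e1 e2 ennreal_mult_cancel_left[of 2 "emeasure lborel (f1 -` A)" "emeasure lborel (f2 -` A)"]
    by simp
  have "emeasure (restrict_space lborel {0..1}) (tent -` A \<inter> space (restrict_space lborel {0..1}))
      = emeasure lborel (tent -` A \<inter> {0..1})"
    using sp S by (simp add: emeasure_restrict_space)
  also have "\<dots> = emeasure lborel (f1 -` A) + emeasure lborel (f2 -` A - {1/2})"
    using eq plus_emeasure[OF m1 m2' disj] by simp
  also have "\<dots> = emeasure lborel A" using e1 e2' uv by (simp add: mult_2)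
  also have "\<dots> = emeasure (restrict_space lborel {0..1}) A"
    using S Asub by (simp add: emeasure_restrict_space)
  finally show "emeasure (restrict_space lborel {0..1}) (tent -` A \<inter> space (restrict_space lborel {0..1}))
      = emeasure (restrict_space lborel {0..1}) A" .
qed

lemma tent_net: "generated_by_task_net relu {0..1} tent"
  unfolding generated_by_task_net_def
proof (intro exI[of _ "[[Neuron [[1]] [] [] 0, Neuron [[1]] [] [] (-1/2)], [Neuron [[2, -4]] [] [] 0]]"] conjI ballI)
  fix x :: real assume x: "x \<in> {0..1}"
  have "hd (net_out relu [[Neuron [[1]] [] [] 0, Neuron [[1]] [] [] (-1/2)], [Neuron [[2, -4]] [] [] 0]] [x])
     = relu (2 * relu x - 4 * relu (x - 1/2))"
    by (simp add: net_out_def layer_out_def neuron_out_def lin_def)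
  also have "\<dots> = tent x" using x unfolding relu_def tent_def max_def min_def by auto
  finally show "tent x = hd (net_out relu [[Neuron [[1]] [] [] 0, Neuron [[1]] [] [] (-1/2)], [Neuron [[2, -4]] [] [] 0]] [x])" by simp
qed simp_all

theorem lemma1:
  shows "\<exists>(T :: real \<Rightarrow> real) (\<xi> :: real).
           measure_preserving_on unit_leb T \<and>
           generated_by_task_net relu {0..1} T \<and>
           \<xi> \<in> {0..1} \<and>
           (\<forall>x\<in>{0..1}. \<forall>\<epsilon>>0. \<exists>m::nat. \<bar>x - (T ^^ m) \<xi>\<bar> < \<epsilon>)"
proof -
  define y where "y j = min 1 (real (snd (prod_decode j)) / (real (fst (prod_decode j)) + 1))" for j
  define e where "e j = 1 / (real (fst (prod_decode j)) + 1)" for j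
  define R where "R j a b \<longleftrightarrow> (\<exists>n. \<forall>w\<in>{a..b}. \<bar>(tent^^n) w - y j\<bar> < e j)" for j a b
  have "\<exists>\<xi>\<in>{0..1}. \<forall>j. \<exists>a b. a \<le> \<xi> \<and> \<xi> \<le> b \<and> R j a b"
  proof (rule nest)
    fix j :: nat and a b :: real assume ab: "0 \<le> a" "a < b" "b \<le> 1"
    have "0 \<le> y j" "y j \<le> 1" "e j > 0" unfolding y_def e_def by auto
    then show "\<exists>a' b'. a \<le> a' \<and> a' < b' \<and> b' \<le> b \<and> R j a' b'" unfolding R_def
      using tent_step[OF ab, of "y j" "e j"] by blast
  qed
  then obtain \<xi> where \<xi>: "\<xi> \<in> {0..1}" "\<forall>j. \<exists>a b. a \<le> \<xi> \<and> \<xi> \<le> b \<and> R j a b" by blast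
  have orb: "\<exists>n. \<bar>(tent^^n) \<xi> - y j\<bar> < e j" for j
  proof -
    obtain a b where "a \<le> \<xi>" "\<xi> \<le> b" "R j a b" using \<xi>(2) by blast
    then show ?thesis unfolding R_def by auto
  qed
  have dense: "\<forall>x\<in>{0..1}. \<forall>\<epsilon>>0. \<exists>m::nat. \<bar>x - (tent ^^ m) \<xi>\<bar> < \<epsilon>"
  proof (intro ballI allI impI)
    fix x :: real and \<epsilon> :: real assume x: "x \<in> {0..1}" and ep: "\<epsilon> > 0"
    obtain N where N: "inverse (real (Suc N)) < \<epsilon>/2" using reals_Archimedean[of "\<epsilon>/2"] ep by auto
    have Np: "(0::real) < real N + 1" by simp
    have N': "1 / (real N + 1) < \<epsilon>/2" using N by (simp add: inverse_eq_divide add.commute)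
    define i where "i = nat \<lfloor>x * (real N + 1)\<rfloor>"
    have x0: "0 \<le> x * (real N + 1)" using x by simp
    have ii: "real i = of_int \<lfloor>x * (real N + 1)\<rfloor>" unfolding i_def using x0 by simp
    have i1: "real i \<le> x * (real N + 1)" using ii by simp
    have i2: "x * (real N + 1) < real i + 1" using ii by linarith
    define j where "j = prod_encode (N, i)"
    have pd: "prod_decode j = (N, i)" unfolding j_def by simp
    have q1: "real i / (real N + 1) \<le> x" using i1 Np by (simp add: divide_simps)
    have "x - real i / (real N + 1) = (x * (real N + 1) - real i) / (real N + 1)"
      using Np by (simp add: field_simps)
    also have "\<dots> < 1 / (real N + 1)" using i2 Np by (intro divide_strict_right_mono) auto
    finally have q2: "x - real i / (real N + 1) < 1 / (real N + 1)" .
    have "real i / (real N + 1) \<le> 1" using q1 x by (meson atLeastAtMost_iff order_trans)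
    then have yj: "y j = real i / (real N + 1)" unfolding y_def pd by simp
    have ej: "e j = 1 / (real N + 1)" unfolding e_def pd by simp
    obtain n where n: "\<bar>(tent^^n) \<xi> - y j\<bar> < e j" using orb by blast
    have "\<bar>x - (tent ^^ n) \<xi>\<bar> < \<epsilon>" using n yj ej q1 q2 N' by linarith
    then show "\<exists>m::nat. \<bar>x - (tent ^^ m) \<xi>\<bar> < \<epsilon>" by blast
  qed
  show ?thesis using tent_mp tent_net \<xi>(1) dense by blast
qed

end
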